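(* Let $p$ be a prime greater than $3$. Then \[ \sum_{k=0}^{p-1}\frac{15k+4}{(-27)^k}\binom{2k}{k}^2\binom{3k}{k}\equiv 4\left(\frac{p}{3}\right)p\pmod{p^2}, \] where $\left(\frac{p}{3}\right)$ is the Legendre symbol.
   Context: The congruence is in the ring of rationals whose denominators are prime to $p$. *)

theory Defs
  imports Complex_Main "HOL-Number_Theory.Number_Theory"
begin

text \<open>Congruence in the ring Z_(p) of rationals whose denominators are prime to p:
  a is congruent to b modulo m iff (a - b) / m is a rational whose denominator is prime to p.\<close>
definition rat_cong_p :: "nat \<Rightarrow> rat \<Rightarrow> rat \<Rightarrow> rat \<Rightarrow> bool" where
  "rat_cong_p p a b m \<longleftrightarrow>
     (\<exists>u v :: int. v \<noteq> 0 \<and> coprime v (int p) \<and> a - b = m * (of_int u / of_int v))"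

end

theory Submission
  imports Defs
begin

definition "pa n = (\<Prod>j<n. 2*int j+1)"
definition "pb (k::int) n = (\<Prod>j<n. 3*k+1+3*int j)"
definition "pc (k::int) n = (\<Prod>j<n. 6*k+2+3*int j)"
definition "pd (k::int) n = (\<Prod>j<n. 2-3*k+3*int j)"

definition BB :: "nat \<Rightarrow> int \<Rightarrow> rat" where
  "BB n k = ((-2)^n / 9^n) * of_int (pa n * pb k n * (pc k n)^2) / (of_nat (fact n)^3 * of_int (pd k n))"
definition FF :: "nat \<Rightarrow> int \<Rightarrow> rat" where
  "FF n k = (15*of_nat n + 12*of_int k + 4) * BB n k"
definition Qp :: "rat \<Rightarrow> rat \<Rightarrow> rat" where
  "Qp x y = 27*x^3+(135*y+45)*x^2+(108*y^2-36*y-51)*x-(216*y^3+540*y^2+369*y+71)"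
definition GG :: "nat \<Rightarrow> int \<Rightarrow> rat" where
  "GG n k = BB n k * (27 * of_nat n^3 * (3*of_nat n - 1 - 3*of_int k) * Qp (of_nat n) (of_int k))
      / (4*(3*of_int k+1)^4*(6*of_int k+5)^2)"

lemma pa_Suc: "pa (Suc n) = pa n * (2*int n+1)" by (simp add: pa_def)
lemma pb_Suc: "pb k (Suc n) = pb k n * (3*k+1+3*int n)" by (simp add: pb_def)
lemma pc_Suc: "pc k (Suc n) = pc k n * (6*k+2+3*int n)" by (simp add: pc_def)
lemma pd_Suc: "pd k (Suc n) = pd k n * (2-3*k+3*int n)" by (simp add: pd_def)

lemma pb_shift: "pb k (Suc n) = (3*k+1) * pb (k+1) n"
  unfolding pb_def by (subst prod.lessThan_Suc_shift) (simp add: algebra_simps)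
lemma pc_shift: "pc k (Suc (Suc n)) = (6*k+2) * (6*k+5) * pc (k+1) n"
  unfolding pc_def by (subst prod.lessThan_Suc_shift, subst prod.lessThan_Suc_shift) (simp add: algebra_simps)
lemma pd_shift: "pd (k+1) (Suc n) = (-1-3*k) * pd k n"
  unfolding pd_def by (subst prod.lessThan_Suc_shift) (simp add: algebra_simps)

lemma pd_nz: "pd k n \<noteq> 0"
proof -
  have "2-3*k+3*int j \<noteq> 0" for j by presburger
  then show ?thesis unfolding pd_def by (simp add: prod_zero_iff)
qed

lemma pb_rel: "(3*k+1) * pb (k+1) n = pb k n * (3*k+1+3*int n)"
  using pb_shift[of k n] pb_Suc[of k n] by simp
lemma pc_rel: "(6*k+2) * (6*k+5) * pc (k+1) n = pc k n * (6*k+2+3*int n) * (6*k+5+3*int n)"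
  using pc_shift[of k n] pc_Suc[of k n] pc_Suc[of k "Suc n"] by (simp add: algebra_simps)
lemma pd_rel: "pd (k+1) n * (3*int n-1-3*k) = (-1-3*k) * pd k n"
  using pd_shift[of k n] pd_Suc[of "k+1" n] by (simp add: algebra_simps)

lemma nz_rat: 
  "(3*of_int k+1::rat) \<noteq> 0" "(6*of_int k+5::rat) \<noteq> 0" "(6*of_int k+2::rat) \<noteq> 0" "(-1-3*of_int k::rat) \<noteq> 0"
  "(3*of_nat n-1-3*of_int k::rat) \<noteq> 0" "(2-3*of_int k+3*of_nat n::rat) \<noteq> 0"
proof -
  have a: "3*k+1 \<noteq> 0" "6*k+5 \<noteq> 0" "6*k+2\<noteq>0" "-1-3*k\<noteq>0" "3*int n-1-3*k\<noteq>0" "2-3*k+3*int n \<noteq> 0" by presburger+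
  show "(3*of_int k+1::rat) \<noteq> 0" using a(1) by (metis (mono_tags) of_int_eq_0_iff of_int_1 of_int_add of_int_mult of_int_numeral)
  show "(6*of_int k+5::rat) \<noteq> 0" using a(2) by (metis (mono_tags) of_int_eq_0_iff of_int_add of_int_mult of_int_numeral)
  show "(6*of_int k+2::rat) \<noteq> 0" using a(3) by (metis (mono_tags) of_int_eq_0_iff of_int_add of_int_mult of_int_numeral)
  show "(-1-3*of_int k::rat) \<noteq> 0" using a(4) by (metis (mono_tags) of_int_eq_0_iff of_int_1 of_int_diff of_int_minus of_int_mult of_int_numeral)
  show "(3*of_nat n-1-3*of_int k::rat) \<noteq> 0" using a(5) by (metis (mono_tags) of_int_eq_0_iff of_int_1 of_int_diff of_int_of_nat_eq of_int_mult of_int_numeral)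
  show "(2-3*of_int k+3*of_nat n::rat) \<noteq> 0" using a(6) by (metis (mono_tags) of_int_eq_0_iff of_int_add of_int_diff of_int_of_nat_eq of_int_mult of_int_numeral)
qed

lemma frac4: fixes a b c d e f :: rat
  assumes "b\<noteq>0" "d\<noteq>0" "e\<noteq>0" "f\<noteq>0"
  shows "(a/b)*(c/d)^2/(e/f) = (a*c^2*f)/(b*d^2*e)"
  using assms by (simp add: field_simps power2_eq_square)

lemma den_id: fixes y :: rat shows "(3*y+1)*((6*y+2)*(6*y+5))^2*(-1-3*y) = -(4*(3*y+1)^4*(6*y+5)^2)"
  by (simp add: power2_eq_square power4_eq_xxxx algebra_simps)

lemma BB_k: "BB n (k+1) = BB n k * ((3*of_int k+1+3*of_nat n)*((6*of_int k+2+3*of_nat n)*(6*of_int k+5+3*of_nat n))^2*(3*of_nat n-1-3*of_int k)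
      / (-(4*(3*of_int k+1)^4*(6*of_int k+5)^2)))"
proof -
  let ?x = "of_nat n :: rat" and ?y = "of_int k :: rat"
  note h = nz_rat
  have e1: "of_int (pb (k+1) n) = (of_int (pb k n) * (3*?y+1+3*?x))/(3*?y+1)"
    using arg_cong[OF pb_rel[of k n], of "of_int :: int \<Rightarrow> rat"] h by (simp add: field_simps)
  have c: "(6*?y+2)*(6*?y+5) \<noteq> 0" using h by simp
  have "of_int (pc (k+1) n) * ((6*?y+2)*(6*?y+5)) = of_int (pc k n) * (6*?y+2+3*?x)*(6*?y+5+3*?x)"
    using arg_cong[OF pc_rel[of k n], of "of_int :: int \<Rightarrow> rat"] by (simp add: algebra_simps)
  then have e2: "of_int (pc (k+1) n) = (of_int (pc k n) * (6*?y+2+3*?x)*(6*?y+5+3*?x))/((6*?y+2)*(6*?y+5))"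
    using c by (simp add: eq_divide_eq)
  have e3: "of_int (pd (k+1) n) = ((-1-3*?y) * of_int (pd k n))/(3*?x-1-3*?y)"
    using arg_cong[OF pd_rel[of k n], of "of_int :: int \<Rightarrow> rat"] h by (simp add: field_simps)
  have pdnz: "(of_int (pd k n)::rat) \<noteq> 0" using pd_nz by simp
  have pdnz': "(of_int (pd (k+1) n)::rat) \<noteq> 0" using pd_nz by simp
  define C where "C = ((-2)^n / 9^n) * of_int (pa n) / (of_nat (fact n)^3 :: rat)"
  have BBa: "BB n j = C * (of_int (pb j n) * of_int (pc j n)^2 / of_int (pd j n))" for j
    unfolding BB_def C_def by (simp add: field_simps)
  define u1 where "u1 = (3*?y+1+3*?x)/(3*?y+1)"
  define u2 where "u2 = (6*?y+2+3*?x)*(6*?y+5+3*?x)/((6*?y+2)*(6*?y+5))"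
  define u3 where "u3 = (-1-3*?y)/(3*?x-1-3*?y)"
  have u3: "u3 \<noteq> 0" unfolding u3_def using h by simp
  have f1: "of_int (pb (k+1) n) = of_int (pb k n) * u1" unfolding e1 u1_def by simp
  have f2: "of_int (pc (k+1) n) = of_int (pc k n) * u2" unfolding e2 u2_def by simp
  have f3: "of_int (pd (k+1) n) = of_int (pd k n) * u3" unfolding e3 u3_def by simp
  have "of_int (pb (k+1) n) * of_int (pc (k+1) n)^2 / of_int (pd (k+1) n)
     = (of_int (pb k n) * of_int (pc k n)^2 / of_int (pd k n)) * (u1 * u2^2 / u3)"
    unfolding f1 f2 f3 using u3 pdnz by (simp add: power_mult_distrib)
  moreover have "u1 * u2^2 / u3 = ((3*?y+1+3*?x)*((6*?y+2+3*?x)*(6*?y+5+3*?x))^2*(3*?x-1-3*?y)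
      / (-(4*(3*?y+1)^4*(6*?y+5)^2)))"
  proof -
    have "u1 * u2^2 / u3 = ((3*?y+1+3*?x)*((6*?y+2+3*?x)*(6*?y+5+3*?x))^2*(3*?x-1-3*?y))
        / ((3*?y+1)*((6*?y+2)*(6*?y+5))^2*(-1-3*?y))"
      unfolding u1_def u2_def u3_def by (rule frac4) (use h in auto)
    also have "(3*?y+1)*((6*?y+2)*(6*?y+5))^2*(-1-3*?y) = -(4*(3*?y+1)^4*(6*?y+5)^2)" by (rule den_id)
    finally show ?thesis .
  qed
  ultimately show ?thesis unfolding BBa by simp
qed

lemma absBBn: fixes c P m f Dd x e :: rat
  assumes "f\<noteq>0" "Dd\<noteq>0" "x\<noteq>0" "e\<noteq>0"
  shows "c*(-2/9)*(P*m)/((x*f)^3*(Dd*e)) = c*P/(f^3*Dd) * ((-2)*m/(9*(x^3*e)))"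
  using assms by (simp add: field_simps power_mult_distrib)

lemma BB_n: "BB (Suc n) k = BB n k * ((-2)*((2*of_nat n+1)*(3*of_int k+1+3*of_nat n)*(6*of_int k+2+3*of_nat n)^2)
     / (9*((of_nat n+1)^3*(2-3*of_int k+3*of_nat n))))"
proof -
  let ?x = "of_nat n :: rat" and ?y = "of_int k :: rat"
  have h: "(2-3*?y+3*?x) \<noteq> 0" by (rule nz_rat)
  have pdnz: "(of_int (pd k n)::rat) \<noteq> 0" using pd_nz by simp
  have e1: "((-2)^Suc n / 9^Suc n :: rat) = ((-2)^n/9^n) * (-2/9)" by simp
  have e2: "(of_int (pa (Suc n) * pb k (Suc n) * (pc k (Suc n))^2) :: rat) = of_int (pa n * pb k n * (pc k n)^2)
      * ((2*?x+1)*(3*?y+1+3*?x)*(6*?y+2+3*?x)^2)"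
    unfolding pa_Suc pb_Suc pc_Suc by (simp add: algebra_simps power2_eq_square)
  have e3: "(of_nat (fact (Suc n)) :: rat) = (?x+1) * of_nat (fact n)" by (simp add: algebra_simps)
  have e4: "(of_int (pd k (Suc n)) :: rat) = of_int (pd k n) * (2-3*?y+3*?x)" unfolding pd_Suc by simp
  show ?thesis unfolding BB_def e1 e2 e3 e4
    by (rule absBBn) (use h pdnz in auto)
qed

lemma core_id:
  fixes x y :: rat
  assumes "3*y+1 \<noteq> 0" "6*y+5 \<noteq> 0" "x+1 \<noteq> 0" "2-3*y+3*x \<noteq> 0"
  defines "D \<equiv> 4*(3*y+1)^4*(6*y+5)^2"
  defines "Z \<equiv> (x+1)^3*(2-3*y+3*x)"
  shows "(15*x+12*y+16) * ((3*y+1+3*x)*((6*y+2+3*x)*(6*y+5+3*x))^2*(3*x-1-3*y) / (-D))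
     - (15*x+12*y+4)
   = (-2)*((2*x+1)*(3*y+1+3*x)*(6*y+2+3*x)^2)/(9*Z) * (27*Z*Qp (x+1) y/D)
     - 27*x^3*(3*x-1-3*y)*Qp x y/D"
proof -
  have D: "D \<noteq> 0" using assms unfolding D_def by simp
  have Z: "Z \<noteq> 0" using assms unfolding Z_def by simp
  define W where "W = (2*x+1)*(3*y+1+3*x)*(6*y+2+3*x)^2"
  define A where "A = (15*x+12*y+16) * ((3*y+1+3*x)*((6*y+2+3*x)*(6*y+5+3*x))^2*(3*x-1-3*y))"
  have P: "-9*A - 36*(15*x+12*y+4)*(3*y+1)^4*(6*y+5)^2 = -54*W*Qp (x+1) y - 243*x^3*(3*x-1-3*y)*Qp x y"
    unfolding A_def W_def Qp_def by (simp add: algebra_simps power2_eq_square power3_eq_cube power4_eq_xxxx)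
  have L: "(15*x+12*y+16) * ((3*y+1+3*x)*((6*y+2+3*x)*(6*y+5+3*x))^2*(3*x-1-3*y) / (-D))
     - (15*x+12*y+4) = (-A - (15*x+12*y+4)*D)/D"
    unfolding A_def using D by (simp add: field_simps)
  have R: "(-2)*W/(9*Z) * (27*Z*Qp (x+1) y/D) - 27*x^3*(3*x-1-3*y)*Qp x y/D = (-6*W*Qp (x+1) y - 27*x^3*(3*x-1-3*y)*Qp x y)/D"
    using D Z by (simp add: field_simps)
  have "-A - (15*x+12*y+4)*D = -6*W*Qp (x+1) y - 27*x^3*(3*x-1-3*y)*Qp x y"
    using P unfolding D_def by (simp add: algebra_simps)
  then show ?thesis using L R unfolding W_def by simp
qed

lemma WZ: "FF n (k+1) - FF n k = GG (Suc n) k - GG n k"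
proof -
  let ?x = "of_nat n :: rat" and ?y = "of_int k :: rat"
  have h1: "3*?y+1 \<noteq> 0" "6*?y+5 \<noteq> 0" "?x+1 \<noteq> 0" "2-3*?y+3*?x \<noteq> 0" using nz_rat by auto
  define b where "b = BB n k"
  have G1: "GG (Suc n) k = BB (Suc n) k * (27*((?x+1)^3*(2-3*?y+3*?x))*Qp (?x+1) ?y/(4*(3*?y+1)^4*(6*?y+5)^2))"
    unfolding GG_def by (simp add: algebra_simps)
  have G0: "GG n k = b * (27*?x^3*(3*?x-1-3*?y)*Qp ?x ?y/(4*(3*?y+1)^4*(6*?y+5)^2))"
    unfolding GG_def b_def by simp
  have F1: "FF n (k+1) = (15*?x+12*?y+16) * (b * ((3*?y+1+3*?x)*((6*?y+2+3*?x)*(6*?y+5+3*?x))^2*(3*?x-1-3*?y)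
      / (-(4*(3*?y+1)^4*(6*?y+5)^2))))"
    unfolding FF_def BB_k b_def by (simp add: algebra_simps)
  have F0: "FF n k = (15*?x+12*?y+4) * b" unfolding FF_def b_def by simp
  have "FF n (k+1) - FF n k = b * ((15*?x+12*?y+16) * ((3*?y+1+3*?x)*((6*?y+2+3*?x)*(6*?y+5+3*?x))^2*(3*?x-1-3*?y)
      / (-(4*(3*?y+1)^4*(6*?y+5)^2))) - (15*?x+12*?y+4))"
    unfolding F1 F0 by (simp add: algebra_simps)
  also have "\<dots> = b * ((-2)*((2*?x+1)*(3*?y+1+3*?x)*(6*?y+2+3*?x)^2)/(9*((?x+1)^3*(2-3*?y+3*?x))) * (27*((?x+1)^3*(2-3*?y+3*?x))*Qp (?x+1) ?y/(4*(3*?y+1)^4*(6*?y+5)^2))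
     - 27*?x^3*(3*?x-1-3*?y)*Qp ?x ?y/(4*(3*?y+1)^4*(6*?y+5)^2))"
    using core_id[OF h1] by simp
  also have "\<dots> = GG (Suc n) k - GG n k"
    unfolding G1 G0 BB_n b_def by (simp add: algebra_simps)
  finally show ?thesis .
qed

lemma GG0: "GG 0 k = 0" by (simp add: GG_def)
lemma tele1: "(\<Sum>n<N. FF n (k+1)) - (\<Sum>n<N. FF n k) = GG N k"
proof -
  have "(\<Sum>n<N. FF n (k+1)) - (\<Sum>n<N. FF n k) = (\<Sum>n<N. GG (Suc n) k - GG n k)"
    by (simp add: WZ sum_subtractf[symmetric])
  also have "\<dots> = GG N k" using sum_lessThan_telescope[of "\<lambda>n. GG n k" N] by (simp add: GG0)
  finally show ?thesis .
qed
lemma tele_pos: "(\<Sum>n<N. FF n (int M)) - (\<Sum>n<N. FF n 0) = (\<Sum>m<M. GG N (int m))"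
proof (induction M)
  case 0 then show ?case by simp
next
  case (Suc M)
  have "(\<Sum>n<N. FF n (int (Suc M))) - (\<Sum>n<N. FF n (int M)) = GG N (int M)"
    using tele1[where N=N and k="int M"] by (simp add: add.commute)
  then show ?case using Suc by simp
qed
lemma tele_neg: "(\<Sum>n<N. FF n 0) - (\<Sum>n<N. FF n (- int M)) = (\<Sum>m<M. GG N (- int m - 1))"
proof (induction M)
  case 0 then show ?case by simp
next
  case (Suc M)
  have "(\<Sum>n<N. FF n (- int M)) - (\<Sum>n<N. FF n (- int (Suc M))) = GG N (- int (Suc M))"
    using tele1[where N=N and k="- int (Suc M)"] by simp
  moreover have "- int (Suc M) = - int M - 1" by simp
  ultimately have "(\<Sum>n<N. FF n (- int M)) - (\<Sum>n<N. FF n (- int (Suc M))) = GG N (- int M - 1)" by metis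
  then show ?case using Suc by simp
qed

lemma pa_fact: "pa n * 2^n * int (fact n) = int (fact (2*n))"
proof (induction n)
  case 0 then show ?case by (simp add: pa_def)
next
  case (Suc n)
  have "fact (2*Suc n) = (fact (2*n) * (2*n+1) * (2*n+2) :: nat)"
    by (simp add: algebra_simps)
  then have "int (fact (2*Suc n)) = int (fact (2*n)) * (2*int n+1) * (2*int n+2)" by (simp add: algebra_simps)
  also have "\<dots> = pa n * 2^n * int (fact n) * (2*int n+1) * (2*int n+2)" using Suc by simp
  also have "\<dots> = pa (Suc n) * 2^(Suc n) * int (fact (Suc n))" by (simp add: pa_Suc algebra_simps)
  finally show ?case ..
qed
lemma pbc_fact: "pb 0 n * pc 0 n * 3^n * int (fact n) = int (fact (3*n))"
proof (induction n)
  case 0 then show ?case by (simp add: pb_def pc_def)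
next
  case (Suc n)
  have "fact (3*Suc n) = (fact (3*n) * (3*n+1) * (3*n+2) * (3*n+3) :: nat)"
    by (simp add: algebra_simps numeral_3_eq_3)
  then have "int (fact (3*Suc n)) = int (fact (3*n)) * (3*int n+1) * (3*int n+2) * (3*int n+3)" by (simp add: algebra_simps)
  also have "\<dots> = pb 0 n * pc 0 n * 3^n * int (fact n) * (3*int n+1) * (3*int n+2) * (3*int n+3)" using Suc by simp
  also have "\<dots> = pb 0 (Suc n) * pc 0 (Suc n) * 3^(Suc n) * int (fact (Suc n))" by (simp add: pb_Suc pc_Suc algebra_simps)
  finally show ?case ..
qed
lemma binom_prod: "(2*n choose n)^2 * (3*n choose n) * fact n ^ 5 = fact (2*n) * fact (3*n)"
proof -
  have a: "(2*n choose n) * fact n * fact n = fact (2*n)"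
    using binomial_fact_lemma[of n "2*n"] by (simp add: mult_2 algebra_simps)
  have b0: "fact n * fact (3*n - n) * (3*n choose n) = fact (3*n)"
    by (rule binomial_fact_lemma) simp
  have "3*n - n = 2*n" by simp
  note b1 = b0[unfolded this]
  have b: "(3*n choose n) * fact n * fact (2*n) = fact (3*n)" using b1 by (simp only: ac_simps)
  have "(2*n choose n)^2 * (3*n choose n) * fact n ^ 5 = ((2*n choose n) * fact n * fact n) * ((3*n choose n) * fact n * ((2*n choose n) * fact n * fact n))"
    by (simp add: power2_eq_square algebra_simps power_numeral_reduce)
  also have "\<dots> = fact (2*n) * fact (3*n)" unfolding a b ..
  finally show ?thesis .
qed
lemma absFF0: fixes m nn t2 t3 a b f q :: rat
  assumes "f\<noteq>0" "nn\<noteq>0" "t2\<noteq>0" "t3\<noteq>0" "q\<noteq>0" "q*m = nn*t2*t3"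
  shows "m/nn * (a/(t2*f) * (b/(t3*f))) / f^3 = 1/q * (a*b/f^5)"
proof -
  have m: "m = nn*t2*t3/q" using assms by (simp add: field_simps)
  show ?thesis unfolding m using assms by (simp add: field_simps eval_nat_numeral)
qed

lemma FF0: "FF n 0 = (15 * of_nat n + 4) / (-27) ^ n * of_nat ((2 * n choose n) ^ 2 * (3 * n choose n))"
proof -
  have pcd: "pc 0 n = pd 0 n" unfolding pc_def pd_def by simp
  have pdnz: "pd 0 n \<noteq> 0" by (rule pd_nz)
  have e: "(of_int (pa n * pb 0 n * (pc 0 n)^2) / of_int (pd 0 n) :: rat) = of_int (pa n) * of_int (pb 0 n * pc 0 n)"
    using pdnz unfolding pcd by (simp add: power2_eq_square)
  have e1: "(of_int (pa n) :: rat) = of_nat (fact (2*n)) / (2^n * of_nat (fact n))"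
    using arg_cong[OF pa_fact[of n], of "of_int :: int \<Rightarrow> rat"] by (simp add: field_simps)
  have e2: "(of_int (pb 0 n * pc 0 n) :: rat) = of_nat (fact (3*n)) / (3^n * of_nat (fact n))"
    using arg_cong[OF pbc_fact[of n], of "of_int :: int \<Rightarrow> rat"] by (simp add: field_simps)
  have e3: "(of_nat ((2 * n choose n) ^ 2 * (3 * n choose n)) :: rat) = of_nat (fact (2*n)) * of_nat (fact (3*n)) / of_nat (fact n)^5"
    using arg_cong[OF binom_prod[of n], of "of_nat :: nat \<Rightarrow> rat"] by (simp add: field_simps)
  have "BB n 0 = ((-2)^n / 9^n) * (of_int (pa n * pb 0 n * (pc 0 n)^2) / of_int (pd 0 n)) / of_nat (fact n)^3"
    unfolding BB_def by simp
  also have "\<dots> = ((-2)^n / 9^n) * (of_nat (fact (2*n)) / (2^n * of_nat (fact n)) * (of_nat (fact (3*n)) / (3^n * of_nat (fact n)))) / of_nat (fact n)^3"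
    unfolding e e1 e2 ..
  also have "\<dots> = 1 / (-27)^n * (of_nat (fact (2*n)) * of_nat (fact (3*n)) / of_nat (fact n)^5)"
  proof (rule absFF0)
    show "((-27)::rat)^n * (-2)^n = 9^n * 2^n * 3^n" by (simp add: power_mult_distrib[symmetric])
  qed auto
  finally have "BB n 0 = 1 / (-27)^n * (of_nat (fact (2*n)) * of_nat (fact (3*n)) / of_nat (fact n)^5)" .
  then show ?thesis unfolding FF_def e3 by simp
qed

definition pZ :: "nat \<Rightarrow> nat \<Rightarrow> rat \<Rightarrow> bool" where
  "pZ p e x \<longleftrightarrow> (\<exists>u v::int. v \<noteq> 0 \<and> \<not> int p dvd v \<and> x = of_int (int p ^ e) * (of_int u / of_int v))"

lemma pZ_0: "prime p \<Longrightarrow> pZ p e 0"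
  unfolding pZ_def by (rule exI[of _ 0], rule exI[of _ 1]) (auto simp: prime_gt_1_nat)

lemma pZ_add:
  assumes p: "prime p" and "pZ p e x" "pZ p e y"
  shows "pZ p e (x+y)"
proof -
  obtain u v where uv: "v \<noteq> 0" "\<not> int p dvd v" "x = of_int (int p ^ e) * (of_int u / of_int v)"
    using assms(2) unfolding pZ_def by blast
  obtain u' v' where uv': "v' \<noteq> 0" "\<not> int p dvd v'" "y = of_int (int p ^ e) * (of_int u' / of_int v')"
    using assms(3) unfolding pZ_def by blast
  have pr: "prime (int p)" using p by simp
  have "\<not> int p dvd v*v'" using uv(2) uv'(2) pr by (simp add: prime_dvd_mult_iff)
  moreover have "v*v' \<noteq> 0" using uv uv' by simp
  moreover have "x + y = of_int (int p ^ e) * (of_int (u*v'+u'*v) / of_int (v*v'))"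
    unfolding uv(3) uv'(3) using uv(1) uv'(1) by (simp add: field_simps)
  ultimately show ?thesis unfolding pZ_def by blast
qed

lemma pZ_uminus: assumes "pZ p e x" shows "pZ p e (-x)"
proof -
  obtain u v where uv: "v \<noteq> 0" "\<not> int p dvd v" "x = of_int (int p ^ e) * (of_int u / of_int v)"
    using assms unfolding pZ_def by blast
  have "-x = of_int (int p ^ e) * (of_int (-u) / of_int v)" unfolding uv(3) by simp
  then show ?thesis unfolding pZ_def using uv(1,2) by blast
qed

lemma pZ_diff: "prime p \<Longrightarrow> pZ p e x \<Longrightarrow> pZ p e y \<Longrightarrow> pZ p e (x-y)"
  using pZ_add[of p e x "-y"] pZ_uminus[of p e y] by simp

lemma pZ_sum: "prime p \<Longrightarrow> (\<And>x. x \<in> A \<Longrightarrow> pZ p e (f x)) \<Longrightarrow> pZ p e (sum f A)"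
proof (induction A rule: infinite_finite_induct)
  case (infinite A) then show ?case by (simp add: pZ_0)
next
  case empty then show ?case by (simp add: pZ_0)
next
  case (insert x F) then show ?case by (simp add: pZ_add)
qed

lemma pZ_frac:
  fixes N D D' :: int
  assumes p: "prime p" and D: "D = int p ^ b * D'" and "D' \<noteq> 0" "\<not> int p dvd D'"
    and N: "int p ^ (b+e) dvd N"
  shows "pZ p e (of_int N / of_int D)"
proof -
  obtain N' where N': "N = int p ^ (b+e) * N'" using N by blast
  have pnz: "(of_int (int p) :: rat) \<noteq> 0" using p prime_gt_0_nat by fastforce
  have "(of_int N / of_int D :: rat) = of_int (int p ^ e) * (of_int N' / of_int D')"
    unfolding N' D using pnz assms(3) by (simp add: power_add field_simps)
  then show ?thesis unfolding pZ_def using assms(3,4) by blast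
qed

lemma ex_j:
  assumes p: "prime p" "p > 3"
  shows "\<exists>j<p. int p dvd c + 3 * int j"
proof -
  have pr: "prime (int p)" using p by simp
  have "\<not> int p dvd 3"
  proof
    assume "int p dvd 3"
    then have "p dvd 3" by presburger
    then have "p \<le> 3" by (simp add: dvd_imp_le)
    then show False using p by simp
  qed
  then have "coprime 3 (int p)" using pr by (simp add: prime_imp_coprime coprime_commute)
  then obtain x where x: "[3 * x = 1] (mod int p)" using cong_solve_coprime_int by blast
  define j where "j = (- c * x) mod int p"
  have j0: "0 \<le> j" "j < int p" unfolding j_def using p prime_gt_0_nat by auto
  have "[c + 3 * j = c + 3 * (- c * x)] (mod int p)"
    unfolding j_def by (intro cong_add cong_refl cong_mult) (simp add: cong_def)
  moreover have "[c + 3 * (- c * x) = c + (-c) * (3*x)] (mod int p)" by (simp add: algebra_simps)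
  moreover have "[c + (-c) * (3*x) = c + (-c) * 1] (mod int p)"
    by (intro cong_add cong_refl cong_mult x)
  ultimately have "[c + 3 * j = 0] (mod int p)" by (simp add: cong_def)
  then have "int p dvd c + 3 * j" by (simp add: cong_0_iff)
  moreover have "nat j < p" "int (nat j) = j" using j0 by auto
  ultimately show ?thesis by (intro exI[of _ "nat j"]) simp
qed

lemma dvd_prodL:
  assumes p: "prime p" "p > 3"
  shows "int p dvd (\<Prod>j<p. c + 3 * int j)"
proof -
  obtain j where "j < p" "int p dvd c + 3 * int j" using ex_j[OF p] by blast
  moreover have "c + 3 * int j dvd (\<Prod>j<p. c + 3 * int j)" using \<open>j < p\<close> by (intro dvd_prodI) auto
  ultimately show ?thesis by (blast intro: dvd_trans)
qed

lemma prodL_exact: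
  assumes p: "prime p" "p > 3"
    and nz: "\<And>j. j < p \<Longrightarrow> c + 3 * int j \<noteq> 0"
    and bd: "\<And>j. j < p \<Longrightarrow> \<bar>c + 3 * int j\<bar> < int p ^ 2"
  shows "\<exists>t. (\<Prod>j<p. c + 3 * int j) = int p * t \<and> t \<noteq> 0 \<and> \<not> int p dvd t"
proof -
  have pr: "prime (int p)" using p by simp
  have n3: "\<not> int p dvd 3"
  proof
    assume "int p dvd 3"
    then have "p dvd 3" by presburger
    then have "p \<le> 3" by (simp add: dvd_imp_le)
    then show False using p by simp
  qed
  obtain j0 where j0: "j0 < p" "int p dvd c + 3 * int j0" using ex_j[OF p] by blast
  obtain s where s: "c + 3 * int j0 = int p * s" using j0 by blast
  have snz: "s \<noteq> 0" using nz[OF j0(1)] s by auto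
  have "\<not> int p dvd s"
  proof
    assume "int p dvd s"
    then obtain r where "s = int p * r" by blast
    then have "c + 3 * int j0 = int p ^ 2 * r" using s by (simp add: power2_eq_square)
    moreover have "r \<noteq> 0" using snz \<open>s = int p * r\<close> by auto
    moreover have "\<bar>r\<bar> \<ge> 1" using \<open>r \<noteq> 0\<close> by (cases "r > 0") auto
    moreover have "int p ^ 2 * 1 \<le> int p ^ 2 * \<bar>r\<bar>" using \<open>\<bar>r\<bar> \<ge> 1\<close> by (intro mult_left_mono) auto
    ultimately have "\<bar>c + 3 * int j0\<bar> \<ge> int p ^ 2" by (simp add: abs_mult)
    then show False using bd[OF j0(1)] by simp
  qed
  have others: "\<not> int p dvd c + 3 * int j" if "j < p" "j \<noteq> j0" for j
  proof
    assume "int p dvd c + 3 * int j"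
    then have "int p dvd (c + 3 * int j) - (c + 3 * int j0)" using j0(2) by (rule dvd_diff)
    then have "int p dvd 3 * (int j - int j0)" by (simp add: algebra_simps)
    then have "int p dvd (int j - int j0)" using prime_dvd_mult_iff[OF pr, of 3 "int j - int j0"] n3 by blast
    moreover have "\<bar>int j - int j0\<bar> < int p" using that j0 by auto
    moreover have "int j - int j0 \<noteq> 0" using that by simp
    ultimately show False using dvd_imp_le_int[of "int j - int j0" "int p"] by simp
  qed
  define t where "t = s * (\<Prod>j\<in>{..<p} - {j0}. c + 3 * int j)"
  have "(\<Prod>j<p. c + 3 * int j) = (c + 3 * int j0) * (\<Prod>j\<in>{..<p} - {j0}. c + 3 * int j)"
    using j0(1) by (subst prod.remove[of _ j0]) auto
  then have e: "(\<Prod>j<p. c + 3 * int j) = int p * t" unfolding t_def s by simp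
  have "\<not> int p dvd (\<Prod>j\<in>{..<p} - {j0}. c + 3 * int j)"
    using others pr by (subst prime_dvd_prod_iff) auto
  then have "\<not> int p dvd t" unfolding t_def using pr \<open>\<not> int p dvd s\<close> by (simp add: prime_dvd_mult_iff)
  moreover have "t \<noteq> 0" unfolding t_def using snz nz by (simp add: prod_zero_iff)
  ultimately show ?thesis using e by blast
qed

lemma n3: assumes "prime p" "p > 3" shows "\<not> int p dvd 3"
proof
  assume "int p dvd 3"
  then have "p dvd 3" by presburger
  then have "p \<le> 3" by (simp add: dvd_imp_le)
  then show False using assms by simp
qed

lemma ndvd_small: assumes "int p dvd x" "x \<noteq> 0" "\<bar>x\<bar> < int p" shows False
  using dvd_imp_le_int[OF assms(2,1)] assms(3) by simp

lemma ndvd_9: assumes "prime p" "p > 3" shows "\<not> int p dvd 9 ^ m"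
proof
  have pr: "prime (int p)" using assms by simp
  assume "int p dvd 9 ^ m"
  then have "int p dvd 9" using pr prime_dvd_power by blast
  then show False using n3[OF assms] prime_dvd_mult_iff[OF pr, of 3 3] by simp
qed

lemma ndvd_fact: assumes "prime p" "n < p" shows "\<not> int p dvd int (fact n)"
proof
  assume "int p dvd int (fact n)"
  then have "p dvd fact n" by (simp only: of_nat_dvd_iff)
  then show False using assms prime_dvd_fact_iff by auto
qed

lemma FF_frac: "FF n k = of_int ((15*int n+12*k+4)*(-2)^n*pa n*pb k n*(pc k n)^2) / of_int (9^n*int (fact n)^3*pd k n)"
  unfolding FF_def BB_def by (simp add: field_simps)

lemma FFK:
  assumes p: "prime p" "p > 3" and n: "1 \<le> n" "n < p" and K: "int p dvd 3*K+1"
  shows "pZ p 2 (FF n K)"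
proof -
  have pr: "prime (int p)" using p by simp
  have "6*K+2+3*int 0 dvd pc K n" unfolding pc_def using n by (intro dvd_prodI) auto
  moreover have "int p dvd 6*K+2+3*int 0"
  proof -
    have "6*K+2+3*int 0 = 2*(3*K+1)" by simp
    moreover have "int p dvd 2*(3*K+1)" using K by (rule dvd_mult)
    ultimately show ?thesis by simp
  qed
  ultimately have "int p dvd pc K n" by (blast intro: dvd_trans)
  then have "int p ^ 2 dvd (pc K n)^2" by (rule dvd_power_same)
  then have N: "int p ^ (0+2) dvd (15*int n+12*K+4)*(-2)^n*pa n*pb K n*(pc K n)^2"
    unfolding add_0 by (rule dvd_mult)
  have pdn: "\<not> int p dvd pd K n"
  proof
    assume "int p dvd pd K n"
    then obtain j where j: "j < n" "int p dvd 2-3*K+3*int j" unfolding pd_def using pr by (subst (asm) prime_dvd_prod_iff) auto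
    have "3*(int j+1) = (2-3*K+3*int j) + (3*K+1)" by simp
    then have "int p dvd 3*(int j+1)" using j(2) K by (simp only: dvd_add)
    then have "int p dvd int j + 1" using n3[OF p] prime_dvd_mult_iff[OF pr, of 3 "int j + 1"] by blast
    then show False using ndvd_small[of p "int j+1"] j n by simp
  qed
  have D: "\<not> int p dvd 9^n*int (fact n)^3*pd K n"
    using ndvd_9[OF p] ndvd_fact[OF p(1) n(2)] pdn pr by (simp add: prime_dvd_mult_iff prime_dvd_power_iff)
  have Dnz: "9^n*int (fact n)^3*pd K n \<noteq> 0" using pd_nz by simp
  show ?thesis unfolding FF_frac
    by (rule pZ_frac[OF p(1) _ Dnz D N]) simp
qed

lemma FF_0: "FF 0 k = 12*of_int k+4" unfolding FF_def BB_def by (simp add: pa_def pb_def pc_def pd_def)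

definition Qi :: "int \<Rightarrow> int \<Rightarrow> int" where
  "Qi n k = 27*n^3+(135*k+45)*n^2+(108*k^2-36*k-51)*n-(216*k^3+540*k^2+369*k+71)"

lemma Qp_Qi: "Qp (of_nat n) (of_int k) = of_int (Qi (int n) k)"
  unfolding Qp_def Qi_def by simp

lemma GG_frac: "GG n k = of_int ((-2)^n*pa n*pb k n*(pc k n)^2 * (27*int n^3*(3*int n-1-3*k)*Qi (int n) k))
   / of_int (9^n*int (fact n)^3*pd k n*(4*(3*k+1)^4*(6*k+5)^2))"
  unfolding GG_def BB_def Qp_Qi by (simp add: field_simps)

lemma p_odd: fixes p :: nat assumes "prime p" "p > 3" shows "odd p" using prime_odd_nat[OF assms(1)] assms(2) by simp
lemma p_ge5: fixes p :: nat assumes "prime p" "p > 3" shows "p \<ge> 5"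
proof -
  have "p \<noteq> 4" using p_odd[OF assms] by auto
  then show ?thesis using assms(2) by simp
qed

lemma pa_dvd: assumes "prime p" "p > 3" shows "int p dvd pa p"
proof -
  have o: "odd p" by (rule p_odd[OF assms])
  define j where "j = (p - 1) div 2"
  have j: "j < p" "2*int j+1 = int p" using o assms unfolding j_def by (auto elim!: oddE)
  have "2*int j+1 dvd pa p" unfolding pa_def using j by (intro dvd_prodI) auto
  then show ?thesis using j by simp
qed

lemma pd_ex:
  assumes p: "prime p" "p > 3" and k: "- int p - 1 \<le> 3*k" "3*k \<le> int p"
  shows "\<exists>t. pd k p = int p * t \<and> t \<noteq> 0 \<and> \<not> int p dvd t"
proof -
  have pd: "pd k p = (\<Prod>j<p. (2-3*k) + 3 * int j)" unfolding pd_def by simp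
  have p5: "int p \<ge> 5" using p_ge5[OF p] by simp
  have sq: "int p ^ 2 \<ge> 5 * int p" using p5 by (simp add: power2_eq_square)
  show ?thesis unfolding pd
  proof (rule prodL_exact[OF p])
    fix j assume "j < p"
    show "2 - 3*k + 3*int j \<noteq> 0" by presburger
    show "\<bar>2 - 3*k + 3*int j\<bar> < int p ^ 2" using k \<open>j < p\<close> sq by auto
  qed
qed

lemma absD: fixes a P F t R c :: int
  shows "a*(P*F)^3*(P*t)*(4*(P^b*R)*c) = P^(4+b)*(a*F^3*t*(4*R*c))"
  by (simp add: power_add power_mult_distrib power3_eq_cube power4_eq_xxxx algebra_simps)

lemma pZ_GG_general:
  assumes p: "prime p" "p > 3" and k: "- int p - 1 \<le> 3*k" "3*k \<le> int p"
    and b: "(3*k+1)^4 = int p ^ b * R" "R \<noteq> 0" "\<not> int p dvd R"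
    and c: "\<not> int p dvd 6*k+5"
    and N: "int p ^ (4 + b + 2) dvd (-2)^p*pa p*pb k p*(pc k p)^2 * (27*int p^3*(3*int p-1-3*k)*Qi (int p) k)"
  shows "pZ p 2 (GG p k)"
proof -
  have pr: "prime (int p)" using p by simp
  obtain t where t: "pd k p = int p * t" "t \<noteq> 0" "\<not> int p dvd t" using pd_ex[OF p k] by blast
  have p0: "p > 0" using p by simp
  have f: "int (fact p) = int p * int (fact (p - 1))"
    by (simp only: fact_reduce[OF p0] of_nat_mult of_nat_id)
  define D' where "D' = 9^p*int (fact (p-1))^3*t*(4*R*(6*k+5)^2)"
  have D: "9^p*int (fact p)^3*pd k p*(4*(3*k+1)^4*(6*k+5)^2) = int p ^ (4+b) * D'"
    unfolding D'_def f t(1) b(1) by (rule absD)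
  have c5: "6*k+5 \<noteq> 0" by presburger
  have D'nz: "D' \<noteq> 0" unfolding D'_def using t(2) b(2) c5 by simp
  have n2: "\<not> int p dvd 4"
  proof
    assume "int p dvd 4" then have "int p \<le> 4" by (rule zdvd_imp_le) simp
    then show False using p_ge5[OF p] by simp
  qed
  have nd: "\<not> int p dvd D'"
    unfolding D'_def using ndvd_9[OF p] ndvd_fact[of p "p-1"] p t(3) b(3) c pr n2
    by (simp add: prime_dvd_mult_iff prime_dvd_power_iff prime_gt_0_nat)
  show ?thesis unfolding GG_frac D
    by (rule pZ_frac[where b="4+b" and e=2, OF p(1) refl D'nz nd N])
qed

lemma dvd3: fixes a x y z :: int
  assumes "a^i dvd x" "a^j dvd y" "a^l dvd z" shows "a^(i+j+l) dvd x*y*z"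
  unfolding power_add using assms by (intro mult_dvd_mono) auto

lemma N_dvd:
  assumes "int p^e dvd pb k p*(pc k p)^2*(27*int p^3*(3*int p-1-3*k)*Qi (int p) k)"
  shows "int p^e dvd (-2)^p*pa p*pb k p*(pc k p)^2 * (27*int p^3*(3*int p-1-3*k)*Qi (int p) k)"
proof -
  have "(-2)^p*pa p*pb k p*(pc k p)^2 * (27*int p^3*(3*int p-1-3*k)*Qi (int p) k)
    = ((-2)^p*pa p) * (pb k p*(pc k p)^2*(27*int p^3*(3*int p-1-3*k)*Qi (int p) k))" by (simp add: ac_simps)
  then show ?thesis by (subst \<open>_ = _\<close>) (rule dvd_mult[OF assms])
qed

lemma pbc_dvd:
  assumes p: "prime p" "p > 3"
  shows "int p^1 dvd pb k p" "int p^2 dvd (pc k p)^2"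
proof -
  show "int p^1 dvd pb k p" unfolding pb_def using dvd_prodL[OF p, of "3*k+1"] by simp
  have "int p dvd pc k p" unfolding pc_def using dvd_prodL[OF p, of "6*k+2"] by simp
  then show "int p^2 dvd (pc k p)^2" by (rule dvd_power_same)
qed

lemma GG_ord:
  assumes p: "prime p" "p > 3" and k: "- int p - 1 \<le> 3*k" "3*k \<le> int p"
    and c1: "\<not> int p dvd 3*k+1" and c: "\<not> int p dvd 6*k+5"
  shows "pZ p 2 (GG p k)"
proof (rule pZ_GG_general[OF p k, where b=0 and R="(3*k+1)^4"])
  have pr: "prime (int p)" using p by simp
  show "(3*k+1)^4 = int p ^ 0 * (3*k+1)^4" by simp
  have "3*k+1 \<noteq> 0" by presburger
  then show "(3*k+1)^4 \<noteq> 0" by simp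
  show "\<not> int p dvd (3*k+1)^4" using c1 pr by (simp add: prime_dvd_power_iff)
  show "\<not> int p dvd 6*k+5" by (rule c)
  have "int p^3 dvd 27*int p^3*(3*int p-1-3*k)*Qi (int p) k" by simp
  then have "int p^(1+2+3) dvd pb k p*(pc k p)^2*(27*int p^3*(3*int p-1-3*k)*Qi (int p) k)"
    using pbc_dvd[OF p] by (intro dvd3)
  then show "int p ^ (4 + 0 + 2) dvd (-2)^p*pa p*pb k p*(pc k p)^2 * (27*int p^3*(3*int p-1-3*k)*Qi (int p) k)"
    by (intro N_dvd) simp
qed

lemma Qi_special: assumes "3*k+1 = - n" shows "Qi n k = 2*n^3"
proof -
  have "Qi n k = 27*n^3 + 45*(3*k+1)*n^2 + (12*(3*k+1)^2 - 36*(3*k+1) - 27)*n - (8*(3*k+1)^3 + 36*(3*k+1)^2 + 27*(3*k+1))"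
    unfolding Qi_def by (simp add: algebra_simps power2_eq_square power3_eq_cube)
  also have "\<dots> = 2*n^3" unfolding assms by (simp add: algebra_simps power2_eq_square power3_eq_cube)
  finally show ?thesis .
qed

lemma GG_spec:
  assumes p: "prime p" "p > 3" and k: "3*k+1 = - int p"
  shows "pZ p 2 (GG p k)"
proof (rule pZ_GG_general[OF p _ _, where b=4 and R=1])
  have pr: "prime (int p)" using p by simp
  show "- int p - 1 \<le> 3*k" "3*k \<le> int p" using k by auto
  show "(3*k+1)^4 = int p ^ 4 * 1" using k by simp
  show "(1::int) \<noteq> 0" by simp
  show "\<not> int p dvd 1" using p by simp
  show "\<not> int p dvd 6*k+5"
  proof
    assume "int p dvd 6*k+5"
    moreover have "6*k+5 = 3 - 2 * int p" using k by simp
    ultimately have "int p dvd 3 - 2 * int p" by simp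
    then have "int p dvd (3 - 2*int p) + 2 * int p" by (rule dvd_add) simp
    then show False using n3[OF p] by simp
  qed
  have e: "27*int p^3*(3*int p-1-3*k)*Qi (int p) k = int p^7 * 216"
    using Qi_special[OF k] k by (simp add: algebra_simps eval_nat_numeral)
  have "int p^7 dvd 27*int p^3*(3*int p-1-3*k)*Qi (int p) k" unfolding e by simp
  then have "int p^(1+2+7) dvd pb k p*(pc k p)^2*(27*int p^3*(3*int p-1-3*k)*Qi (int p) k)"
    using pbc_dvd[OF p] by (intro dvd3)
  then show "int p ^ (4 + 4 + 2) dvd (-2)^p*pa p*pb k p*(pc k p)^2 * (27*int p^3*(3*int p-1-3*k)*Qi (int p) k)"
    by (intro N_dvd) simp
qed

lemma Leg1: assumes "p mod 3 = 1" shows "Legendre (int p) 3 = 1"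
proof -
  have "\<not> [int p = 0] (mod 3)" using assms by (simp add: cong_def) presburger
  moreover have "QuadRes 3 (int p)" unfolding QuadRes_def
    by (rule exI[of _ 1]) (use assms in \<open>simp add: cong_def; presburger\<close>)
  ultimately show ?thesis unfolding Legendre_def by simp
qed

lemma Leg2: assumes "p mod 3 = 2" shows "Legendre (int p) 3 = -1"
proof -
  have "\<not> [int p = 0] (mod 3)" using assms by (simp add: cong_def) presburger
  moreover have "\<not> QuadRes 3 (int p)" unfolding QuadRes_def
  proof
    assume "\<exists>y. [y^2 = int p] (mod 3)"
    then obtain y where "[y^2 = int p] (mod 3)" by blast
    then have y: "(y*y) mod 3 = int p mod 3" by (simp add: cong_def power2_eq_square)
    have "y mod 3 = 0 \<or> y mod 3 = 1 \<or> y mod 3 = 2" by presburger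
    moreover have yy: "(y*y) mod 3 = ((y mod 3)*(y mod 3)) mod 3" by (simp add: mod_mult_eq)
    ultimately have "(y*y) mod 3 \<noteq> 2"
    proof (elim disjE)
      assume h: "y mod 3 = 0" have "(y*y) mod 3 = (0*0) mod 3" by (simp only: yy h) then show ?thesis by simp
    next
      assume h: "y mod 3 = 1" have "(y*y) mod 3 = (1*1) mod 3" by (simp only: yy h) then show ?thesis by simp
    next
      assume h: "y mod 3 = 2" have "(y*y) mod 3 = (2*2) mod 3" by (simp only: yy h) then show ?thesis by simp
    qed
    moreover have "int p mod 3 = 2" using assms by presburger
    ultimately show False using y by simp
  qed
  ultimately show ?thesis unfolding Legendre_def by simp
qed

lemma between: assumes "int p dvd x" "0 < x" "x < 2 * int p" shows "x = int p"
proof -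
  obtain c where c: "x = int p * c" using assms(1) by blast
  have pp: "int p > 0" using assms(2) c by (cases "int p = 0") auto
  have "c > 0" using assms(2) c pp by (simp add: zero_less_mult_iff)
  moreover have "c < 2" using assms(3) c pp by simp
  ultimately have "c = 1" by simp
  then show ?thesis using c by simp
qed

lemma sum_split0: assumes "p > 0" shows "(\<Sum>n<p. f n) = f 0 + (\<Sum>n<p-1. f (Suc n))"
proof -
  obtain q where q: "p = Suc q" using assms by (cases p) auto
  show ?thesis unfolding q by (simp only: sum.lessThan_Suc_shift diff_Suc_1)
qed

theorem theorem9:
  fixes p :: nat
  assumes "prime p" and "p > 3"
  shows "rat_cong_p p
           (\<Sum>k = 0..p - 1. (15 * of_nat k + 4) / (-27) ^ k
                * of_nat ((2 * k choose k) ^ 2 * (3 * k choose k)))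
           (4 * of_int (Legendre (int p) 3) * of_nat p)
           (of_nat p ^ 2)"
proof -
  note p = assms
  have pr: "prime (int p)" using p by simp
  have p0: "p > 0" using p by simp
  define S where "S = (\<Sum>n<p. FF n 0)"
  have sumeq: "(\<Sum>k = 0..p - 1. (15 * of_nat k + 4) / (-27) ^ k
                * of_nat ((2 * k choose k) ^ 2 * (3 * k choose k))) = S"
  proof -
    have "{0..p-1} = {..<p}" using p0 by auto
    then show ?thesis unfolding S_def by (simp add: FF0)
  qed
  define L where "L = Legendre (int p) 3"
  have key: "pZ p 2 (S - 4 * of_int L * of_nat p)"
  proof -
    have "p mod 3 = 1 \<or> p mod 3 = 2"
    proof -
      have "p mod 3 \<noteq> 0"
      proof
        assume "p mod 3 = 0"
        then have "3 dvd p" by presburger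
        then have "3 = p" using p(1) unfolding prime_nat_iff by auto
        then show False using p by simp
      qed
      then show ?thesis by presburger
    qed
    then show ?thesis
    proof
      assume m1: "p mod 3 = 1"
      have L: "L = 1" unfolding L_def using Leg1[OF m1] .
      define K where "K = (p - 1) div 3"
      have K: "3 * K + 1 = p" unfolding K_def using m1 p0 by presburger
      have Ki: "3 * int K + 1 = int p" using arg_cong[OF K, of int] by simp
      have t: "(\<Sum>n<p. FF n (int K)) - S = (\<Sum>m<K. GG p (int m))"
        unfolding S_def by (rule tele_pos)
      have F0: "FF 0 (int K) = 4 * of_nat p"
      proof -
        have "(of_nat p :: rat) = of_nat (3*K+1)" using K by simp
        then show ?thesis unfolding FF_0 by simp
      qed
      have eq: "S - 4 * of_int L * of_nat p = (\<Sum>n<p-1. FF (Suc n) (int K)) - (\<Sum>m<K. GG p (int m))"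
        using t sum_split0[OF p0, of "\<lambda>n. FF n (int K)"] F0 L by simp
      have A: "pZ p 2 (\<Sum>n<p-1. FF (Suc n) (int K))"
      proof (rule pZ_sum[OF p(1)])
        fix n assume "n \<in> {..<p-1}"
        then have "1 \<le> Suc n" "Suc n < p" by auto
        moreover have "int p dvd 3 * int K + 1" unfolding Ki by simp
        ultimately show "pZ p 2 (FF (Suc n) (int K))" using FFK[OF p] by blast
      qed
      have B: "pZ p 2 (\<Sum>m<K. GG p (int m))"
      proof (rule pZ_sum[OF p(1)])
        fix m assume "m \<in> {..<K}"
        then have m: "m < K" by simp
        show "pZ p 2 (GG p (int m))"
        proof (rule GG_ord[OF p])
          show "- int p - 1 \<le> 3 * int m" by simp
          show "3 * int m \<le> int p" using m Ki by linarith
          show "\<not> int p dvd 3 * int m + 1"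
          proof
            assume "int p dvd 3 * int m + 1"
            then show False using ndvd_small[of p "3 * int m + 1"] m Ki by linarith
          qed
          show "\<not> int p dvd 6 * int m + 5"
          proof
            assume "int p dvd 6 * int m + 5"
            moreover have "0 < 6 * int m + 5" "6 * int m + 5 < 2 * int p" using m Ki by linarith+
            ultimately have "6 * int m + 5 = int p" by (rule between)
            then show False using Ki by presburger
          qed
        qed
      qed
      show ?thesis unfolding eq using pZ_diff[OF p(1) A B] .
    next
      assume m2: "p mod 3 = 2"
      have L: "L = -1" unfolding L_def using Leg2[OF m2] .
      define M where "M = (p + 1) div 3"
      have M: "3 * M = p + 1" unfolding M_def using m2 by presburger
      have Mi: "3 * int M = int p + 1" using arg_cong[OF M, of int] by simp
      have t: "S - (\<Sum>n<p. FF n (- int M)) = (\<Sum>m<M. GG p (- int m - 1))"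
        unfolding S_def by (rule tele_neg)
      have F0: "FF 0 (- int M) = - 4 * of_nat p"
      proof -
        have "(of_nat (3*M) :: rat) = of_nat (p+1)" using M by simp
        then have "(of_nat p :: rat) = 3 * of_nat M - 1" by simp
        then show ?thesis unfolding FF_0 by simp
      qed
      have eq: "S - 4 * of_int L * of_nat p = (\<Sum>n<p-1. FF (Suc n) (- int M)) + (\<Sum>m<M. GG p (- int m - 1))"
        using t sum_split0[OF p0, of "\<lambda>n. FF n (- int M)"] F0 L by (simp add: algebra_simps)
      have KM: "3 * (- int M) + 1 = - int p" using Mi by linarith
      have A: "pZ p 2 (\<Sum>n<p-1. FF (Suc n) (- int M))"
      proof (rule pZ_sum[OF p(1)])
        fix n assume "n \<in> {..<p-1}"
        then have "1 \<le> Suc n" "Suc n < p" by auto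
        moreover have "int p dvd 3 * (- int M) + 1" unfolding KM by simp
        ultimately show "pZ p 2 (FF (Suc n) (- int M))" using FFK[OF p] by blast
      qed
      have B: "pZ p 2 (\<Sum>m<M. GG p (- int m - 1))"
      proof (rule pZ_sum[OF p(1)])
        fix m assume "m \<in> {..<M}"
        then have m: "m < M" by simp
        show "pZ p 2 (GG p (- int m - 1))"
        proof (cases "m = M - 1")
          case True
          then have "- int m - 1 = - int M" using m by simp
          moreover have "3 * (- int M) + 1 = - int p" by (rule KM)
          ultimately show ?thesis using GG_spec[OF p] by simp
        next
          case False
          then have m': "int m + 2 \<le> int M" using m by simp
          show ?thesis
          proof (rule GG_ord[OF p])
            show "- int p - 1 \<le> 3 * (- int m - 1)" using m' Mi by presburger
            show "3 * (- int m - 1) \<le> int p" by simp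
            show "\<not> int p dvd 3 * (- int m - 1) + 1"
            proof
              assume "int p dvd 3 * (- int m - 1) + 1"
              moreover have "3 * (- int m - 1) + 1 \<noteq> 0" by presburger
              moreover have "\<bar>3 * (- int m - 1) + 1\<bar> < int p"
              proof -
                have e: "3 * (- int m - 1) + 1 = - (3 * int m + 2)" by simp
                have "3 * int m + 2 < int p" using m' Mi by presburger
                then show ?thesis unfolding e by simp
              qed
              ultimately show False by (rule ndvd_small)
            qed
            show "\<not> int p dvd 6 * (- int m - 1) + 5"
            proof
              assume "int p dvd 6 * (- int m - 1) + 5"
              moreover have "6 * (- int m - 1) + 5 = - (6 * int m + 1)" by simp
              ultimately have "int p dvd 6 * int m + 1" by (metis dvd_minus_iff)
              moreover have "0 < 6 * int m + 1" "6 * int m + 1 < 2 * int p" using m' Mi by presburger+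
              ultimately have "6 * int m + 1 = int p" by (rule between)
              then show False using Mi by presburger
            qed
          qed
        qed
      qed
      show ?thesis unfolding eq using pZ_add[OF p(1) A B] .
    qed
  qed
  obtain u v where uv: "v \<noteq> 0" "\<not> int p dvd v" "S - 4 * of_int L * of_nat p = of_int (int p ^ 2) * (of_int u / of_int v)"
    using key unfolding pZ_def by blast
  have cop: "coprime v (int p)" using prime_imp_coprime[OF pr uv(2)] by (simp add: coprime_commute)
  show ?thesis unfolding rat_cong_p_def sumeq L_def[symmetric]
    using uv(1) cop uv(3) by (intro exI[of _ u] exI[of _ v]) simp
qed

end
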